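(* Let $p$ be an odd prime, $s\ge1$, and $r\ge3$ an integer dividing $\frac{p^s+1}2$ or $\frac{p^s-1}2$. Let $\lambda=e^{2\pi i/(2r)}$, define $\Delta_0=1$, $\Delta_1=-\lambda-\lambda^{-1}$, $\Delta_{i+1}=\Delta_1\Delta_i-\Delta_{i-1}$ for $i\ge1$, and $\eta^2=-\frac{(\lambda-\lambda^{-1})^2}{2r}$. Then $\Delta_i\equiv(\Delta_i)^{p^s}\pmod p$ for all $i\ge0$, and $\eta^2\equiv(\eta^2)^{p^s}\pmod p$.
   Context: Congruences are modulo $p$ in the ring $\mathbb Z[\tfrac1{2r},\lambda]$. *)

theory Defs
  imports "HOL-Analysis.Analysis" "HOL-Computational_Algebra.Primes"
begin

inductive_set Zring :: "nat \<Rightarrow> complex \<Rightarrow> complex set" for r :: nat and lam :: complex where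
  one: "1 \<in> Zring r lam"
| half_inv: "1 / (2 * of_nat r) \<in> Zring r lam"
| gen: "lam \<in> Zring r lam"
| neg: "a \<in> Zring r lam \<Longrightarrow> - a \<in> Zring r lam"
| add: "a \<in> Zring r lam \<Longrightarrow> b \<in> Zring r lam \<Longrightarrow> a + b \<in> Zring r lam"
| mult: "a \<in> Zring r lam \<Longrightarrow> b \<in> Zring r lam \<Longrightarrow> a * b \<in> Zring r lam"

definition cong_Zring :: "nat \<Rightarrow> complex \<Rightarrow> nat \<Rightarrow> complex \<Rightarrow> complex \<Rightarrow> bool" where
  "cong_Zring r lam p a b \<longleftrightarrow> (\<exists>c \<in> Zring r lam. a - b = of_nat p * c)"

fun Delta :: "complex \<Rightarrow> nat \<Rightarrow> complex" where
  "Delta lam 0 = 1"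
| "Delta lam (Suc 0) = - lam - inverse lam"
| "Delta lam (Suc (Suc i)) = Delta lam (Suc 0) * Delta lam (Suc i) - Delta lam i"

end

theory Submission
  imports Defs "HOL-Number_Theory.Number_Theory"
begin

lemma Z0: "0 \<in> Zring r lam"
  using Zring.add[OF Zring.one Zring.neg[OF Zring.one]] by simp

lemma Zdiff: "a \<in> Zring r lam \<Longrightarrow> b \<in> Zring r lam \<Longrightarrow> a - b \<in> Zring r lam"
  using Zring.add[OF _ Zring.neg] by (metis diff_conv_add_uminus)

lemma Zpow: "a \<in> Zring r lam \<Longrightarrow> a ^ n \<in> Zring r lam"
  by (induction n) (auto intro: Zring.one Zring.mult)

lemma Znat: "of_nat n \<in> Zring r lam"
  by (induction n) (auto intro: Zring.one Zring.add Z0)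

lemma Zsum: "(\<And>k. k \<in> A \<Longrightarrow> f k \<in> Zring r lam) \<Longrightarrow> sum f A \<in> Zring r lam"
  by (induction A rule: infinite_finite_induct) (auto intro: Z0 Zring.add)

lemma cg_refl: "cong_Zring r lam p a a"
  unfolding cong_Zring_def using Z0 by force

lemma cg_sym: "cong_Zring r lam p a b \<Longrightarrow> cong_Zring r lam p b a"
  unfolding cong_Zring_def
  by (metis Zring.neg minus_diff_eq mult_minus_right)

lemma cg_trans: "cong_Zring r lam p a b \<Longrightarrow> cong_Zring r lam p b c \<Longrightarrow> cong_Zring r lam p a c"
  unfolding cong_Zring_def
proof (elim bexE)
  fix x y assume "x \<in> Zring r lam" "y \<in> Zring r lam" "a - b = of_nat p * x" "b - c = of_nat p * y"
  then show "\<exists>c'\<in>Zring r lam. a - c = of_nat p * c'"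
    by (intro bexI[of _ "x + y"]) (auto intro: Zring.add simp: algebra_simps)
qed

lemma cg_add: "cong_Zring r lam p a b \<Longrightarrow> cong_Zring r lam p c d \<Longrightarrow> cong_Zring r lam p (a + c) (b + d)"
  unfolding cong_Zring_def
proof (elim bexE)
  fix x y assume "x \<in> Zring r lam" "y \<in> Zring r lam" "a - b = of_nat p * x" "c - d = of_nat p * y"
  then show "\<exists>c'\<in>Zring r lam. a + c - (b + d) = of_nat p * c'"
    by (intro bexI[of _ "x + y"]) (auto intro: Zring.add simp: algebra_simps)
qed

lemma cg_mult: "cong_Zring r lam p a b \<Longrightarrow> cong_Zring r lam p c d \<Longrightarrow> a \<in> Zring r lam \<Longrightarrow> d \<in> Zring r lam
   \<Longrightarrow> cong_Zring r lam p (a * c) (b * d)"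
  unfolding cong_Zring_def
proof (elim bexE)
  fix x y assume "x \<in> Zring r lam" "y \<in> Zring r lam" "a - b = of_nat p * x" "c - d = of_nat p * y"
    "a \<in> Zring r lam" "d \<in> Zring r lam"
  moreover have "a * c - b * d = a * (c - d) + (a - b) * d" by (simp add: algebra_simps)
  moreover have "a * y + x * d \<in> Zring r lam" using calculation by (auto intro: Zring.add Zring.mult)
  ultimately show "\<exists>c'\<in>Zring r lam. a * c - b * d = of_nat p * c'"
    by (intro bexI[of _ "a * y + x * d"]) (auto simp: algebra_simps)
qed

lemma cg_pow: "cong_Zring r lam p a b \<Longrightarrow> a \<in> Zring r lam \<Longrightarrow> b \<in> Zring r lam
   \<Longrightarrow> cong_Zring r lam p (a ^ n) (b ^ n)"
  by (induction n) (auto intro: cg_refl cg_mult Zpow)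

lemma frob1:
  assumes "prime p" "a \<in> Zring r lam" "b \<in> Zring r lam"
  shows "cong_Zring r lam p ((a + b) ^ p) (a ^ p + b ^ p)"
proof -
  have p0: "p > 0" using assms(1) prime_gt_0_nat by blast
  have "(a + b) ^ p = (\<Sum>k\<le>p. of_nat (p choose k) * a ^ k * b ^ (p - k))"
    by (rule binomial_ring)
  also have "{..p} = insert 0 (insert p {1..<p})" using p0 by auto
  also have "(\<Sum>k\<in>insert 0 (insert p {1..<p}). of_nat (p choose k) * a ^ k * b ^ (p - k))
     = b ^ p + (a ^ p + (\<Sum>k\<in>{1..<p}. of_nat (p choose k) * a ^ k * b ^ (p - k)))"
    using p0 by (subst sum.insert; auto)+
  finally have e: "(a + b) ^ p - (a ^ p + b ^ p) = (\<Sum>k\<in>{1..<p}. of_nat (p choose k) * a ^ k * b ^ (p - k))"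
    by simp
  have "(\<Sum>k\<in>{1..<p}. of_nat (p choose k) * a ^ k * b ^ (p - k))
      = of_nat p * (\<Sum>k\<in>{1..<p}. of_nat ((p choose k) div p) * a ^ k * b ^ (p - k))"
    unfolding sum_distrib_left
  proof (rule sum.cong)
    fix k assume "k \<in> {1..<p}"
    then have "p dvd (p choose k)" using dvd_choose_prime[of k p] assms(1) by auto
    then have "(p choose k) = p * ((p choose k) div p)" by simp
    then have "(of_nat (p choose k) :: complex) = of_nat p * of_nat ((p choose k) div p)"
      by (metis of_nat_mult)
    then show "of_nat (p choose k) * a ^ k * b ^ (p - k) =
         of_nat p * (of_nat ((p choose k) div p) * a ^ k * b ^ (p - k))" by simp
  qed simp
  moreover have "(\<Sum>k\<in>{1..<p}. of_nat ((p choose k) div p) * a ^ k * b ^ (p - k)) \<in> Zring r lam"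
    by (intro Zsum Zring.mult Znat Zpow assms)
  ultimately show ?thesis unfolding cong_Zring_def using e by metis
qed

lemma frob:
  assumes "prime p" "a \<in> Zring r lam" "b \<in> Zring r lam"
  shows "cong_Zring r lam p ((a + b) ^ (p ^ n)) (a ^ (p ^ n) + b ^ (p ^ n))"
proof (induction n)
  case 0 then show ?case by (simp add: cg_refl)
next
  case (Suc n)
  have "(a + b) ^ (p ^ Suc n) = ((a + b) ^ (p ^ n)) ^ p" by (simp add: power_mult[symmetric] mult.commute)
  moreover have "cong_Zring r lam p (((a + b) ^ (p ^ n)) ^ p) ((a ^ (p ^ n) + b ^ (p ^ n)) ^ p)"
    by (rule cg_pow[OF Suc]) (auto intro: Zpow Zring.add assms)
  moreover have "cong_Zring r lam p ((a ^ (p ^ n) + b ^ (p ^ n)) ^ p) ((a ^ (p ^ n)) ^ p + (b ^ (p ^ n)) ^ p)"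
    by (rule frob1) (auto intro: Zpow assms)
  moreover have "(a ^ (p ^ n)) ^ p + (b ^ (p ^ n)) ^ p = a ^ (p ^ Suc n) + b ^ (p ^ Suc n)"
    by (simp add: power_mult[symmetric] mult.commute)
  ultimately show ?case using cg_trans by metis
qed

lemma cg_neg: "cong_Zring r lam p a b \<Longrightarrow> cong_Zring r lam p (- a) (- b)"
  unfolding cong_Zring_def
  by (metis Zring.neg minus_diff_eq mult_minus_right diff_minus_eq_add add.commute diff_conv_add_uminus)

definition fixd :: "nat \<Rightarrow> complex \<Rightarrow> nat \<Rightarrow> nat \<Rightarrow> complex \<Rightarrow> bool" where
  "fixd r lam p q x \<longleftrightarrow> x \<in> Zring r lam \<and> cong_Zring r lam p (x ^ q) x"

lemma fix_add: assumes "prime p" "fixd r lam p (p ^ n) x" "fixd r lam p (p ^ n) y"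
  shows "fixd r lam p (p ^ n) (x + y)"
  using assms unfolding fixd_def
  by (meson Zring.add cg_add cg_trans frob)

lemma fix_mult: assumes "fixd r lam p q x" "fixd r lam p q y"
  shows "fixd r lam p q (x * y)"
  using assms unfolding fixd_def
  by (metis Zpow Zring.mult cg_mult power_mult_distrib)

lemma fix_neg: assumes "odd q" "fixd r lam p q x"
  shows "fixd r lam p q (- x)"
  using assms unfolding fixd_def
  by (simp add: Zring.neg cg_neg)

lemma fix_one: "fixd r lam p q 1"
  unfolding fixd_def by (simp add: Zring.one cg_refl)

theorem lemma3:
  fixes p s r :: nat
  assumes "prime p" and "odd p" and "s \<ge> 1" and "r \<ge> 3"
    and "r dvd (p ^ s + 1) div 2 \<or> r dvd (p ^ s - 1) div 2"
  defines "lam \<equiv> exp (2 * of_real pi * \<i> / (2 * of_nat r))"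
  defines "eta2 \<equiv> - ((lam - inverse lam) ^ 2) / (2 * of_nat r)"
  shows "(\<forall>i. cong_Zring r lam p (Delta lam i) ((Delta lam i) ^ (p ^ s)))
         \<and> cong_Zring r lam p eta2 (eta2 ^ (p ^ s))"
proof -
  define q where "q = p ^ s"
  have oq: "odd q" using assms(2) by (simp add: q_def)
  have q1: "q \<ge> 1" using oq by (cases q) auto
  have pq: "p dvd q" using assms(3) by (simp add: q_def)
  have cases2: "2 * r dvd q + 1 \<or> 2 * r dvd q - 1"
  proof -
    have "q + 1 = 2 * ((q + 1) div 2)" "q - 1 = 2 * ((q - 1) div 2)" using oq q1 by presburger+
    then show ?thesis using assms(5) unfolding q_def[symmetric] by (metis mult_dvd_mono dvd_refl)
  qed
  have pr: "\<not> p dvd r"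
  proof
    assume "p dvd r"
    then have "p dvd q + 1 \<or> p dvd q - 1" using cases2 by (meson dvd_mult dvd_trans)
    then have "p dvd 1" using pq q1
      by (metis add_diff_cancel_left' dvd_diff_nat le_add_diff_inverse2 diff_diff_cancel)
    then show False using assms(1) by simp
  qed
  have p2r: "\<not> p dvd 2 * r"
    using pr assms(1,2) by (metis prime_dvd_mult_iff dvd_antisym dvd_refl even_numeral prime_nat_iff two_is_prime_nat primes_dvd_imp_eq)
  have r0: "r > 0" using assms(4) by simp
  have lam_pow: "lam ^ (2 * r) = 1"
  proof -
    have "lam ^ (2 * r) = exp (of_nat (2 * r) * (2 * of_real pi * \<i> / (2 * of_nat r)))"
      unfolding lam_def by (rule exp_of_nat_mult[symmetric])
    also have "of_nat (2 * r) * (2 * of_real pi * \<i> / (2 * of_nat r)) = 2 * of_real pi * \<i>"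
      using r0 by (simp add: field_simps)
    finally show ?thesis by simp
  qed
  have lam0: "lam \<noteq> 0" unfolding lam_def by simp
  have invlam: "inverse lam = lam ^ (2 * r - 1)"
  proof -
    have e: "2 * r - 1 + 1 = 2 * r" using r0 by simp
    have "lam * lam ^ (2 * r - 1) = 1"
      using lam_pow by (subst (asm) e[symmetric]) (simp only: power_add power_one_right mult.commute)
    then show ?thesis by (rule inverse_unique)
  qed
  have lamR: "lam \<in> Zring r lam" by (rule Zring.gen)
  have ilamR: "inverse lam \<in> Zring r lam" unfolding invlam by (rule Zpow[OF lamR])
  have lamq: "(lam ^ q = inverse lam \<and> inverse lam ^ q = lam) \<or> (lam ^ q = lam \<and> inverse lam ^ q = inverse lam)"
  proof (cases "2 * r dvd q + 1")
    case True
    then obtain k where k: "q + 1 = 2 * r * k" by blast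
    have "lam ^ (q + 1) = 1" unfolding k by (metis power_mult lam_pow power_one)
    then have "lam * lam ^ q = 1" by simp
    then have "lam ^ q = inverse lam" by (rule inverse_unique[symmetric])
    then show ?thesis by (metis power_inverse inverse_inverse_eq)
  next
    case False
    then obtain k where k: "q - 1 = 2 * r * k" using cases2 by blast
    have "lam ^ (q - 1) = 1" unfolding k by (metis power_mult lam_pow power_one)
    moreover have "q = q - 1 + 1" using q1 by simp
    ultimately have "lam ^ q = lam" by (metis power_add power_one_right mult_1)
    then show ?thesis by (metis power_inverse inverse_inverse_eq)
  qed
  define u :: complex where "u = 1 / (2 * of_nat r)"
  have uR: "u \<in> Zring r lam" unfolding u_def by (rule Zring.half_inv)
  have up: "cong_Zring r lam p (u ^ p) u"
  proof -
    have "[(2 * r) ^ (p - 1) = 1] (mod p)" using fermat_theorem[OF assms(1) p2r] .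
    then have "p dvd (2 * r) ^ (p - 1) - 1" by (rule cong_to_1_nat)
    then obtain k where k: "(2 * r) ^ (p - 1) - 1 = p * k" by blast
    have "(2 * r) ^ (p - 1) \<ge> 1" using r0 by simp
    then have k': "(2 * r) ^ (p - 1) = 1 + p * k" using k by (metis le_add_diff_inverse)
    have p1: "p = Suc (p - 1)" using assms(1) prime_gt_0_nat by simp
    have "u = u ^ p * (2 * of_nat r) ^ (p - 1)"
      using r0 by (subst p1) (simp add: u_def field_simps)
    also have "(2 * of_nat r :: complex) ^ (p - 1) = of_nat ((2 * r) ^ (p - 1))" by simp
    also have "\<dots> = 1 + of_nat p * of_nat k" unfolding k' by simp
    finally have "u ^ p - u = of_nat p * (- (of_nat k * u ^ p))" by (simp add: algebra_simps)
    moreover have "- (of_nat k * u ^ p) \<in> Zring r lam" by (intro Zring.neg Zring.mult Znat Zpow uR)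
    ultimately show ?thesis unfolding cong_Zring_def by blast
  qed
  have ufix: "fixd r lam p (p ^ n) u" for n
  proof (induction n)
    case 0 then show ?case by (simp add: fixd_def uR cg_refl)
  next
    case (Suc n)
    have "u ^ p ^ Suc n = (u ^ p ^ n) ^ p" by (simp add: power_mult[symmetric] mult.commute)
    moreover have "cong_Zring r lam p ((u ^ p ^ n) ^ p) (u ^ p)"
      using Suc uR by (intro cg_pow) (auto simp: fixd_def intro: Zpow)
    ultimately show ?case using up uR cg_trans unfolding fixd_def by metis
  qed
  have D1: "fixd r lam p q (Delta lam 1)"
  proof -
    have e: "Delta lam 1 = (- lam) + (- inverse lam)" by simp
    have R: "Delta lam 1 \<in> Zring r lam" unfolding e by (intro Zring.add Zring.neg lamR ilamR)
    have "cong_Zring r lam p (Delta lam 1 ^ q) ((- lam) ^ q + (- inverse lam) ^ q)"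
      unfolding e q_def by (intro frob assms(1) Zring.neg lamR ilamR)
    moreover have "(- lam) ^ q + (- inverse lam) ^ q = Delta lam 1"
      using oq lamq by auto
    ultimately show ?thesis using R unfolding fixd_def by simp
  qed
  have Dfix2: "fixd r lam p q (Delta lam i) \<and> fixd r lam p q (Delta lam (Suc i))" for i
  proof (induction i)
    case 0 then show ?case using D1 by (simp add: fix_one)
  next
    case (Suc i)
    have "Delta lam (Suc (Suc i)) = Delta lam 1 * Delta lam (Suc i) + (- Delta lam i)" by simp
    moreover have "fixd r lam p q (Delta lam 1 * Delta lam (Suc i) + (- Delta lam i))"
      unfolding q_def using Suc D1 oq assms(1) unfolding q_def
      by (intro fix_add fix_mult fix_neg) auto
    ultimately show ?case using Suc by simp
  qed
  have eta: "eta2 = ((1 + 1 + 1 + 1) + - (Delta lam 1 * Delta lam 1)) * u"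
  proof -
    have "(lam - inverse lam) ^ 2 = Delta lam 1 * Delta lam 1 - 4"
      using lam0 by (simp add: field_simps power2_eq_square)
    then show ?thesis unfolding eta2_def u_def by (simp add: divide_simps)
  qed
  have efix: "fixd r lam p q eta2"
    unfolding eta q_def using D1 oq assms(1) ufix fix_one unfolding q_def
    by (intro fix_add fix_mult fix_neg) auto
  show ?thesis using Dfix2 efix cg_sym unfolding fixd_def q_def by blast
qed

end
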